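(* There is no odd perfect number of the form $n = 5^{\alpha} M^{2\beta}$, where $\alpha$ and $\beta$ are positive integers and $M$ is a square-free positive integer with $5 \nmid M$.
   Context: A positive integer $n$ is perfect if $\sigma(n) = 2n$, where $\sigma(n)$ denotes the sum of all positive divisors of $n$. *)

theory Defs
  imports "HOL-Computational_Algebra.Squarefree"
begin

definition divisor_sum :: "nat \<Rightarrow> nat" where
  "divisor_sum n = (\<Sum>d\<in>{d. d dvd n}. d)"

definition perfect :: "nat \<Rightarrow> bool" where
  "perfect n \<longleftrightarrow> n > 0 \<and> divisor_sum n = 2 * n"

end

theory Submission
  imports Defs "HOL-Number_Theory.Cong"
begin


lemma divisor_sum_mult:
  assumes "coprime a b" "a > 0" "b > 0"
  shows "divisor_sum (a * b) = divisor_sum a * divisor_sum b"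
proof -
  have fa: "finite {d. d dvd a}" using assms(2) by simp
  have fb: "finite {d. d dvd b}" using assms(3) by simp
  have inj: "inj_on (\<lambda>(x,y). x * y) ({d. d dvd a} \<times> {d. d dvd b})"
  proof (rule inj_onI, clarify)
    fix x y u v :: nat
    assume h: "x dvd a" "y dvd b" "u dvd a" "v dvd b" "x * y = u * v"
    have c1: "coprime x v" by (rule coprime_divisors[OF h(1) h(4) assms(1)])
    have c2: "coprime u y" by (rule coprime_divisors[OF h(3) h(2) assms(1)])
    have "x dvd u * v" using h(5) by (metis dvd_triv_left)
    hence "x dvd u" using c1 by (simp add: coprime_dvd_mult_left_iff)
    moreover have "u dvd x * y" using h(5) by (metis dvd_triv_left)
    hence "u dvd x" using c2 by (simp add: coprime_dvd_mult_left_iff)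
    ultimately have xu: "x = u" by (rule dvd_antisym)
    have "x \<noteq> 0" using h(1) assms(2) by (metis dvd_0_left_iff neq0_conv)
    hence "y = v" using h(5) xu by simp
    then show "x = u \<and> y = v" using xu by simp
  qed
  have img: "(\<lambda>(x,y). x * y) ` ({d. d dvd a} \<times> {d. d dvd b}) = {d. d dvd a * b}"
  proof (rule set_eqI, rule iffI)
    fix z assume "z \<in> (\<lambda>(x,y). x * y) ` ({d. d dvd a} \<times> {d. d dvd b})"
    then show "z \<in> {d. d dvd a * b}" by (auto intro: mult_dvd_mono)
  next
    fix z assume "z \<in> {d. d dvd a * b}"
    then obtain x y where "z = x * y" "x dvd a" "y dvd b" using division_decomp by blast
    then show "z \<in> (\<lambda>(x,y). x * y) ` ({d. d dvd a} \<times> {d. d dvd b})" by force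
  qed
  have "divisor_sum (a*b) = (\<Sum>z\<in>(\<lambda>(x,y). x * y) ` ({d. d dvd a} \<times> {d. d dvd b}). z)"
    unfolding divisor_sum_def img ..
  also have "\<dots> = (\<Sum>p\<in>{d. d dvd a} \<times> {d. d dvd b}. (\<lambda>(x,y). x * y) p)"
    by (rule sum.reindex[OF inj, unfolded comp_def])
  also have "\<dots> = (\<Sum>x\<in>{d. d dvd a}. \<Sum>y\<in>{d. d dvd b}. x * y)"
    by (rule sum.cartesian_product[symmetric])
  also have "\<dots> = divisor_sum a * divisor_sum b"
    unfolding divisor_sum_def by (simp add: sum_product)
  finally show ?thesis .
qed

lemma divisor_sum_primepow:
  assumes "prime p"
  shows "divisor_sum (p ^ k) = (\<Sum>i\<le>k. p ^ i)"
proof -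
  have "{d. d dvd p ^ k} = (\<lambda>i. p ^ i) ` {..k}"
    using divides_primepow_nat[OF assms] by auto
  moreover have "inj_on (\<lambda>i. p ^ i) {..k}"
    using prime_gt_1_nat[OF assms] by (auto simp: inj_on_def)
  ultimately show ?thesis unfolding divisor_sum_def by (simp add: sum.reindex)
qed

lemma divisor_sum_ge: "n > 0 \<Longrightarrow> divisor_sum n \<ge> n"
  unfolding divisor_sum_def
  by (rule member_le_sum) auto



lemma sqf_split:
  fixes M q :: nat
  assumes "squarefree M" "prime q" "q dvd M"
  obtains M' where "M = q * M'" "coprime q M'" "squarefree M'" "M' > 0"
proof -
  obtain M' where M': "M = q * M'" using assms(3) by blast
  have "M \<noteq> 0" using assms(1) by (metis not_squarefree_0)
  hence pos: "M' > 0" using M' by simp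
  have "\<not> q dvd M'"
  proof
    assume "q dvd M'"
    hence "q^2 dvd M" using M' by (simp add: power2_eq_square)
    hence "q dvd 1" using squarefreeD[OF assms(1)] by blast
    thus False using assms(2) by simp
  qed
  hence "coprime q M'" using assms(2) by (simp add: prime_imp_coprime)
  moreover have "squarefree M'" using assms(1) M' squarefree_multD(2) by metis
  ultimately show ?thesis using that M' pos by blast
qed

lemma S4:
  fixes q :: nat
  shows "(\<Sum>i<d+4. q^i) = (\<Sum>i<d. q^i) + q^d * (1 + q + q^2 + q^3)"
  by (simp add: algebra_simps power2_eq_square power3_eq_cube numeral_eq_Suc)

lemma S5:
  fixes q :: nat
  shows "(\<Sum>i<d+5. q^i) = (\<Sum>i<d. q^i) + q^d * (1 + q + q^2 + q^3 + q^4)"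
  by (simp add: algebra_simps power2_eq_square power3_eq_cube numeral_eq_Suc)

lemma cyc4:
  fixes q :: nat
  assumes "q mod 5 \<in> {2,3,4}"
  shows "5 dvd (1 + q + q^2 + q^3)"
proof -
  have "[1 + q + q^2 + q^3 = 1 + q mod 5 + (q mod 5)^2 + (q mod 5)^3] (mod 5)"
    by (intro cong_add cong_pow cong_refl; simp add: cong_def)
  hence "(1 + q + q^2 + q^3) mod 5 = (1 + q mod 5 + (q mod 5)^2 + (q mod 5)^3) mod 5"
    by (simp add: cong_def)
  also have "\<dots> = 0" using assms by auto
  finally show ?thesis by presburger
qed

lemma S_mod4:
  fixes q :: nat
  assumes "q mod 5 \<in> {2,3,4}"
  shows "(\<Sum>i<d. q^i) mod 5 = (\<Sum>i<d mod 4. q^i) mod 5"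
proof (induction d rule: nat_less_induct)
  case (1 d)
  show ?case
  proof (cases "d < 4")
    case True then show ?thesis by simp
  next
    case False
    define e where "e = d - 4"
    have e: "d = e + 4" using False unfolding e_def by simp
    obtain t where t: "1 + q + q^2 + q^3 = 5 * t" using cyc4[OF assms] by (elim dvdE)
    have "(\<Sum>i<d. q^i) = (\<Sum>i<e. q^i) + q^e * (1 + q + q^2 + q^3)"
      unfolding e by (rule S4)
    also have "\<dots> = (\<Sum>i<e. q^i) + 5 * (q^e * t)" unfolding t by (simp only: ac_simps)
    finally have "(\<Sum>i<d. q^i) mod 5 = ((\<Sum>i<e. q^i) + 5 * (q^e * t)) mod 5" by (rule arg_cong)
    also have "\<dots> = (\<Sum>i<e. q^i) mod 5" by (rule mod_mult_self2)
    also have "\<dots> = (\<Sum>i<e mod 4. q^i) mod 5"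
      using 1 e by (metis less_add_same_cancel1 zero_less_numeral)
    also have "e mod 4 = d mod 4" using e by simp
    finally show ?thesis .
  qed
qed

lemma S_mod_one:
  fixes q :: nat
  assumes "q mod 5 = 1"
  shows "(\<Sum>i<d. q^i) mod 5 = d mod 5"
proof (induction d)
  case 0 then show ?case by simp
next
  case (Suc d)
  have "q^d mod 5 = (q mod 5)^d mod 5" by (rule power_mod[symmetric])
  hence p: "q^d mod 5 = 1" using assms by simp
  have "(\<Sum>i<Suc d. q^i) mod 5 = ((\<Sum>i<d. q^i) + q^d) mod 5" by simp
  also have "\<dots> = ((\<Sum>i<d. q^i) mod 5 + q^d mod 5) mod 5" by (rule mod_add_eq[symmetric])
  also have "\<dots> = (d mod 5 + 1) mod 5" by (simp only: Suc.IH p)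
  also have "\<dots> = Suc d mod 5" by presburger
  finally show ?case .
qed

lemma not5:
  fixes q d :: nat
  assumes nq: "\<not> 5 dvd q" and "odd d" "\<not> 5 dvd d"
  shows "\<not> 5 dvd (\<Sum>i<d. q^i)"
proof -
  from nq have "q mod 5 \<noteq> 0" by (simp add: dvd_eq_mod_eq_0)
  hence "q mod 5 = 1 \<or> q mod 5 = 2 \<or> q mod 5 = 3 \<or> q mod 5 = 4" by presburger
  hence "q mod 5 \<in> {1,2,3,4}" by simp
  then consider "q mod 5 = 1" | "q mod 5 \<in> {2,3,4}" by auto
  then show ?thesis
  proof cases
    case 1 then show ?thesis using S_mod_one[OF 1, of d] assms(3) by (simp add: dvd_eq_mod_eq_0)
  next
    case 2
    have "d mod 4 = 1 \<or> d mod 4 = 3" using assms(2) by presburger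
    moreover have "(1 + q + q^2) mod 5 \<noteq> 0"
    proof -
      have "[1 + q + q^2 = 1 + q mod 5 + (q mod 5)^2] (mod 5)"
        by (intro cong_add cong_pow cong_refl; simp add: cong_def)
      hence "(1 + q + q^2) mod 5 = (1 + q mod 5 + (q mod 5)^2) mod 5" by (simp add: cong_def)
      also have "\<dots> \<noteq> 0" using 2 by auto
      finally show ?thesis .
    qed
    moreover have s3: "(\<Sum>i<3. q^i) = 1 + q + q^2"
      by (simp add: numeral_3_eq_3 power2_eq_square)
    ultimately have "(\<Sum>i<d mod 4. q^i) mod 5 \<noteq> 0"
    proof (elim disjE)
      assume h: "d mod 4 = 1"
      have "(\<Sum>i<d mod 4. q^i) = 1" unfolding h by simp
      then show ?thesis by simp
    next
      assume h: "d mod 4 = 3" and h2: "(1 + q + q^2) mod 5 \<noteq> 0"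
      have e: "(\<Sum>i<d mod 4. q^i) = 1 + q + q^2" by (simp only: h s3)
      show ?thesis unfolding e by (rule h2)
    qed
    then show ?thesis using S_mod4[OF 2, of d] by (simp add: dvd_eq_mod_eq_0)
  qed
qed

lemma yes5:
  fixes q d :: nat
  assumes "q mod 5 = 1" "5 dvd d"
  shows "5 dvd (\<Sum>i<d. q^i)"
  using S_mod_one[OF assms(1), of d] assms(2) by (simp add: dvd_eq_mod_eq_0)

lemma block5:
  fixes q :: nat
  shows "(1 + q + q^2 + q^3 + q^4) dvd (\<Sum>i<5*k. q^i)"
proof (induction k)
  case 0 then show ?case by simp
next
  case (Suc k)
  have "5 * Suc k = 5 * k + 5" by simp
  then show ?case using Suc S5[of q "5*k"] by (metis dvd_add dvd_triv_right)
qed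


lemma divisor_sum_1: "divisor_sum 1 = 1"
  unfolding divisor_sum_def by simp

lemma sqf_prop:
  fixes M m :: nat
  assumes "squarefree M" "P 1" "\<And>a b. P a \<Longrightarrow> P b \<Longrightarrow> P (a*b)"
    "\<And>q. prime q \<Longrightarrow> q dvd M \<Longrightarrow> P (divisor_sum (q^m))"
  shows "P (divisor_sum (M^m))"
  using assms(1,4)
proof (induction M rule: less_induct)
  case (less M)
  show ?case
  proof (cases "M = 1")
    case True then show ?thesis using assms(2) by (metis divisor_sum_1 power_one)
  next
    case False
    obtain q where q: "prime q" "q dvd M" using prime_factor_nat[OF False] by blast
    obtain M' where M': "M = q * M'" "coprime q M'" "squarefree M'" "M' > 0"
      using sqf_split[OF less.prems(1) q] by blast
    have "M' < M" using M' prime_gt_1_nat[OF q(1)] by simp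
    have IH: "P (divisor_sum (M'^m))"
      using less.IH[OF \<open>M' < M\<close> M'(3)] less.prems(2) M'(1) by (metis dvd_mult)
    have "divisor_sum (M^m) = divisor_sum (q^m) * divisor_sum (M'^m)"
      using M' prime_gt_1_nat[OF q(1)] by (simp add: power_mult_distrib divisor_sum_mult)
    then show ?thesis using assms(3) IH less.prems(2)[OF q] by simp
  qed
qed

lemma odd_sum: "odd (q::nat) \<Longrightarrow> odd (\<Sum>i\<le>2*b. q^i)"
proof (induction b)
  case 0 then show ?case by simp
next
  case (Suc b)
  have eq: "(\<Sum>i\<le>2*Suc b. q^i) = (\<Sum>i\<le>2*b. q^i) + (q^(Suc (2*b)) + q^(Suc (Suc (2*b))))"
    by simp
  have "even (q^(Suc (2*b)) + q^(Suc (Suc (2*b))))" using Suc.prems by simp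
  then show ?case unfolding eq using Suc by simp
qed

lemma three_dvd: "3 dvd (\<Sum>i\<le>2*j+1. (5::nat)^i)"
proof (induction j)
  case 0 then show ?case by simp
next
  case (Suc j)
  have "(\<Sum>i\<le>2*Suc j+1. (5::nat)^i) = (\<Sum>i\<le>2*j+1. 5^i) + 5^(2*j+2) * 6"
    by (simp add: numeral_eq_Suc algebra_simps)
  moreover have "3 dvd 5^(2*j+2)*(6::nat)" by (rule dvd_mult) simp
  ultimately show ?case using dvd_add[OF Suc.IH] by metis
qed

lemma five_sum: "(\<Sum>i\<le>a. (5::nat)^i) = 1 + 5 * (\<Sum>i<a. 5^i)"
  by (induction a) (auto simp: algebra_simps)

lemma geom: "p * (\<Sum>i<k. (p+1::nat)^i) + 1 = (p+1)^k"
  by (induction k) (auto simp: algebra_simps)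

lemma atMost_lessThan: "(\<Sum>i\<le>m. (q::nat)^i) = (\<Sum>i<Suc m. q^i)"
  by (simp add: lessThan_Suc_atMost)

lemma prime_check:
  fixes p B :: nat
  assumes "1 < p" "\<forall>a \<in> set [2..<Suc B]. \<not> a dvd p" "p < Suc B * Suc B"
  shows "prime p"
  unfolding prime_nat_iff
proof (intro conjI allI impI)
  show "1 < p" by fact
  fix m assume "m dvd p"
  then obtain m' where mm: "p = m * m'" by blast
  show "m = 1 \<or> m = p"
  proof (rule ccontr)
    assume c: "\<not> (m = 1 \<or> m = p)"
    have "m \<noteq> 0"
    proof
      assume "m = 0" then show False using mm assms(1) by simp
    qed
    moreover have "m' \<noteq> 0"
    proof
      assume "m' = 0" then show False using mm assms(1) by simp
    qed
    moreover have "m' \<noteq> 1" using c mm by auto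
    ultimately have m2: "m \<ge> 2" "m' \<ge> 2" using c by auto
    have dm: "m dvd p" "m' dvd p" using mm by auto
    have "m \<ge> Suc B"
    proof (rule ccontr)
      assume "\<not> m \<ge> Suc B" then have "m \<in> set [2..<Suc B]" using m2 by auto
      then show False using assms(2) dm by blast
    qed
    moreover have "m' \<ge> Suc B"
    proof (rule ccontr)
      assume "\<not> m' \<ge> Suc B" then have "m' \<in> set [2..<Suc B]" using m2 by auto
      then show False using assms(2) dm by blast
    qed
    ultimately have "Suc B * Suc B \<le> m * m'" by (intro mult_mono) auto
    then show False using mm assms(3) by simp
  qed
qed

lemma p3221: "prime (3221::nat)"
  by (rule prime_check[where B = 56]) (simp_all add: upt_rec)

lemma p3: "prime (3::nat)"
  by (rule prime_check[where B = 1]) (simp_all add: upt_rec)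

lemma p5: "prime (5::nat)"
  by (rule prime_check[where B = 2]) (simp_all add: upt_rec)

lemma p11: "prime (11::nat)"
  by (rule prime_check[where B = 3]) (simp_all add: upt_rec)

lemma prime_dvd_form:
  fixes p a M m :: nat
  assumes "prime p" "p dvd 2 * 5^a * M^m" "p \<noteq> 2" "p \<noteq> 5"
  shows "p dvd M"
proof -
  have "p dvd 2 \<or> p dvd 5^a \<or> p dvd M^m" using assms(1,2) by (simp add: prime_dvd_mult_iff)
  moreover have "\<not> p dvd 2"
  proof
    assume "p dvd 2" then have "p = 1 \<or> p = 2" using two_is_prime_nat prime_nat_iff by blast
    then show False using assms(1,3) by auto
  qed
  moreover have "\<not> p dvd 5^a"
  proof
    assume "p dvd 5^a" then have "p dvd 5" using prime_dvd_power[OF assms(1)] by blast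
    then have "p = 1 \<or> p = 5" using p5 prime_nat_iff by blast
    then show False using assms(1,4) by auto
  qed
  ultimately have "p dvd M^m" by blast
  then show ?thesis using prime_dvd_power[OF assms(1)] by blast
qed

theorem theorem1p2:
  fixes n \<alpha> \<beta> M :: nat
  assumes "\<alpha> > 0" and "\<beta> > 0" and "M > 0" and "squarefree M" and "\<not> 5 dvd M"
    and "n = 5 ^ \<alpha> * M ^ (2 * \<beta>)"
  shows "\<not> (odd n \<and> perfect n)"
proof
  assume H: "odd n \<and> perfect n"
  define m where "m = 2 * \<beta>"
  have nd: "n = 5 ^ \<alpha> * M ^ m" using assms(6) m_def by simp
  have sig: "divisor_sum n = 2 * n" using H unfolding perfect_def by simp
  have cop: "coprime (5^\<alpha>) (M^m)"
    using assms(5) p5 by (simp add: prime_imp_coprime)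
  define s5 where "s5 = divisor_sum (5^\<alpha>)"
  define sM where "sM = divisor_sum (M^m)"
  have s5_eq: "s5 = (\<Sum>i\<le>\<alpha>. 5^i)" unfolding s5_def using divisor_sum_primepow[OF p5] .
  have main: "s5 * sM = 2 * 5^\<alpha> * M^m"
    using sig nd cop assms(3) unfolding s5_def sM_def by (simp add: divisor_sum_mult)
  have Modd: "odd M" using H nd assms(2) m_def by simp
  have sM_odd: "odd sM"
    unfolding sM_def
  proof (rule sqf_prop[OF assms(4)])
    show "odd (1::nat)" by simp
  next
    fix a b :: nat assume "odd a" "odd b" then show "odd (a*b)" by simp
  next
    fix q :: nat assume q: "prime q" "q dvd M"
    have "odd q" using q(2) Modd by (meson dvd_trans even_two_times_div_two odd_two_times_div_two_nat dvd_triv_left)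
    then show "odd (divisor_sum (q^m))" using divisor_sum_primepow[OF q(1)] odd_sum m_def by simp
  qed
  have "even s5" using main sM_odd by (metis even_mult_iff mult.assoc dvd_triv_left)
  hence "odd \<alpha>" using s5_eq odd_sum[of 5] by (metis dvd_mult_div_cancel odd_numeral)
  then obtain j where j: "\<alpha> = 2*j+1" using oddE by blast
  have "3 dvd s5" using s5_eq j three_dvd by simp
  hence "3 dvd s5 * sM" by (rule dvd_mult2)
  hence "3 dvd 2 * 5^\<alpha> * M^m" by (simp only: main)
  hence "3 dvd M"
    by (rule prime_dvd_form[OF p3]) auto
  have s5_nd: "\<not> 5 dvd s5" using s5_eq five_sum by presburger
  have "5 dvd Suc m"
  proof (rule ccontr)
    assume nd5: "\<not> 5 dvd Suc m"
    have "\<not> 5 dvd sM"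
      unfolding sM_def
    proof (rule sqf_prop[OF assms(4)])
      show "\<not> 5 dvd (1::nat)" by simp
    next
      fix a b :: nat assume "\<not> 5 dvd a" "\<not> 5 dvd b" then show "\<not> 5 dvd (a*b)"
        using p5 by (simp add: prime_dvd_mult_iff)
    next
      fix q :: nat assume q: "prime q" "q dvd M"
      have nq: "\<not> 5 dvd q" using q(2) assms(5) dvd_trans by blast
      show "\<not> 5 dvd (divisor_sum (q^m))"
        unfolding divisor_sum_primepow[OF q(1)] atMost_lessThan
        by (rule not5[OF nq _ nd5]) (simp add: m_def)
    qed
    hence "\<not> 5 dvd s5 * sM" using s5_nd p5 by (simp add: prime_dvd_mult_iff)
    moreover have "5 dvd 2 * 5^\<alpha> * M^m" using assms(1) by (simp add: dvd_power)
    ultimately show False using main by simp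
  qed
  then obtain k where k: "Suc m = 5 * k" by blast
  have m4: "m \<ge> 4" using k m_def assms(2) by presburger
  obtain M1 where M1: "M = 3 * M1" "coprime 3 M1" "squarefree M1" "M1 > 0"
    using sqf_split[OF assms(4) p3 \<open>3 dvd M\<close>] by blast
  have sM1: "sM = divisor_sum (3^m) * divisor_sum (M1^m)"
    unfolding sM_def using M1 by (simp add: power_mult_distrib divisor_sum_mult)
  have d3: "divisor_sum (3^m) = (\<Sum>i<5*k. 3^i)"
    by (simp only: divisor_sum_primepow[OF p3] atMost_lessThan k)
  have "121 dvd divisor_sum (3^m)" using d3 block5[of 3 k] by simp
  hence "11 dvd divisor_sum (3^m)" by (rule dvd_trans[rotated]) simp
  hence "11 dvd sM" unfolding sM1 by (rule dvd_mult2)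
  hence "11 dvd s5 * sM" by (rule dvd_mult)
  hence "11 dvd 2 * 5^\<alpha> * M^m" by (simp only: main)
  hence "11 dvd M" by (rule prime_dvd_form[OF p11]) auto
  hence "11 dvd 3 * M1" using M1(1) by simp
  hence "(11::nat) dvd 3 \<or> 11 dvd M1" by (rule prime_dvd_multD[OF p11])
  moreover have "\<not> (11::nat) dvd 3" by (auto dest: dvd_imp_le)
  ultimately have "11 dvd M1" by blast
  obtain M2 where M2: "M1 = 11 * M2" "coprime 11 M2" "squarefree M2" "M2 > 0"
    using sqf_split[OF M1(3) p11 \<open>11 dvd M1\<close>] by blast
  have sM2: "divisor_sum (M1^m) = divisor_sum (11^m) * divisor_sum (M2^m)"
    using M2 by (simp add: power_mult_distrib divisor_sum_mult)
  have d11: "divisor_sum (11^m) = (\<Sum>i<5*k. 11^i)"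
    by (simp only: divisor_sum_primepow[OF p11] atMost_lessThan k)
  have "16105 dvd divisor_sum (11^m)" using d11 block5[of 11 k] by simp
  hence "3221 dvd divisor_sum (11^m)" by (rule dvd_trans[rotated]) simp
  hence "3221 dvd divisor_sum (M1^m)" unfolding sM2 by (rule dvd_mult2)
  hence "3221 dvd sM" unfolding sM1 by (rule dvd_mult)
  hence "3221 dvd s5 * sM" by (rule dvd_mult)
  hence "3221 dvd 2 * 5^\<alpha> * M^m" by (simp only: main)
  hence "3221 dvd M" by (rule prime_dvd_form[OF p3221]) auto
  hence "3221 dvd 3 * (11 * M2)" using M1(1) M2(1) by simp
  hence "(3221::nat) dvd 3 \<or> 3221 dvd 11 * M2" by (rule prime_dvd_multD[OF p3221])
  moreover have "\<not> (3221::nat) dvd 3" by (auto dest: dvd_imp_le)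
  ultimately have "3221 dvd 11 * M2" by blast
  hence "(3221::nat) dvd 11 \<or> 3221 dvd M2" by (rule prime_dvd_multD[OF p3221])
  moreover have "\<not> (3221::nat) dvd 11" by (auto dest: dvd_imp_le)
  ultimately have "3221 dvd M2" by blast
  obtain K where K: "M2 = 3221 * K" "coprime 3221 K" "squarefree K" "K > 0"
    using sqf_split[OF M2(3) p3221 \<open>3221 dvd M2\<close>] by blast
  have sM3: "divisor_sum (M2^m) = divisor_sum (3221^m) * divisor_sum (K^m)"
    using K by (simp add: power_mult_distrib divisor_sum_mult)
  have d3221: "divisor_sum (3221^m) = (\<Sum>i<5*k. 3221^i)"
    by (simp only: divisor_sum_primepow[OF p3221] atMost_lessThan k)
  have "5 dvd divisor_sum (11^m)" using d11 yes5[of 11 "5*k"] by simp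
  moreover have "5 dvd divisor_sum (3221^m)" using d3221 yes5[of 3221 "5*k"] by simp
  ultimately have "5 * 5 dvd divisor_sum (11^m) * divisor_sum (3221^m)" by (rule mult_dvd_mono)
  moreover have "sM = (divisor_sum (11^m) * divisor_sum (3221^m)) * (divisor_sum (3^m) * divisor_sum (K^m))"
    unfolding sM1 sM2 sM3 by (simp only: ac_simps)
  ultimately have "5 * 5 dvd sM" by (metis dvd_mult2)
  hence "5 * 5 dvd s5 * sM" by (rule dvd_mult)
  hence "25 dvd 2 * 5^\<alpha> * M^m" by (simp only: main) simp
  have a2: "\<alpha> \<ge> 2"
  proof (rule ccontr)
    assume "\<not> \<alpha> \<ge> 2"
    hence "\<alpha> = 1" using assms(1) by simp
    hence "5 * 5 dvd 5 * (2 * M^m)" using \<open>25 dvd 2 * 5^\<alpha> * M^m\<close> by (simp add: algebra_simps)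
    hence "5 dvd 2 * M^m" by simp
    hence "(5::nat) dvd 2 \<or> 5 dvd M^m" by (rule prime_dvd_multD[OF p5])
    moreover have "\<not> (5::nat) dvd 2" by (auto dest: dvd_imp_le)
    ultimately have "5 dvd M^m" by blast
    hence "5 dvd M" by (rule prime_dvd_power[OF p5])
    thus False using assms(5) by simp
  qed
  define a where "a = s5"
  define b where "b = divisor_sum (3^m)"
  define c where "c = divisor_sum (11^m)"
  define X where "X = (5::nat)^\<alpha>"
  define Y where "Y = (3::nat)^m"
  define Z where "Z = (11::nat)^m"
  have ea: "4 * a + 1 = 5 * X"
    using geom[of 4 "Suc \<alpha>"] unfolding a_def X_def s5_eq atMost_lessThan by simp
  have eb: "2 * b + 1 = 3 * Y"
    using geom[of 2 "Suc m"] unfolding b_def Y_def divisor_sum_primepow[OF p3] atMost_lessThan by simp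
  have ec: "10 * c + 1 = 11 * Z"
    using geom[of 10 "Suc m"] unfolding c_def Z_def divisor_sum_primepow[OF p11] atMost_lessThan by simp
  have X25: "X \<ge> 25" unfolding X_def using power_increasing[OF a2, of "5::nat"] by simp
  have Y81: "Y \<ge> 81" unfolding Y_def using power_increasing[OF m4, of "3::nat"] by simp
  have Z1: "Z \<ge> 14641" unfolding Z_def using power_increasing[OF m4, of "11::nat"] by simp
  have ga: "100 * a \<ge> 124 * X" using ea X25 by linarith
  have gb: "100 * b \<ge> 149 * Y" using eb Y81 by linarith
  have gc: "10000 * c \<ge> 10999 * Z" using ec Z1 by linarith
  have "(124 * X) * (149 * Y) * (10999 * Z) \<le> (100 * a) * (100 * b) * (10000 * c)"
    by (rule mult_le_mono[OF mult_le_mono[OF ga gb] gc])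
  hence ineq1: "203217524 * (X * Y * Z) \<le> 100000000 * (a * b * c)" by (simp add: algebra_simps)
  have ge3221: "divisor_sum (3221^m) \<ge> 3221^m" by (rule divisor_sum_ge) simp
  have geK: "divisor_sum (K^m) \<ge> K^m" using K(4) by (intro divisor_sum_ge) simp
  have "M^m = 3^m * (11^m * (3221^m * K^m))"
    unfolding M1(1) M2(1) K(1) by (simp only: power_mult_distrib)
  hence Mfac: "M^m = Y * Z * (3221^m * K^m)"
    unfolding Y_def Z_def by (simp only: mult.assoc)
  have "a * b * c * (3221^m * K^m) \<le> a * b * c * (divisor_sum (3221^m) * divisor_sum (K^m))"
    by (rule mult_le_mono2[OF mult_le_mono[OF ge3221 geK]])
  also have "\<dots> = s5 * sM" unfolding a_def b_def c_def sM1 sM2 sM3 by (simp only: ac_simps)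
  also have "\<dots> = (2 * (X * Y * Z)) * (3221^m * K^m)" unfolding main Mfac X_def by (simp only: ac_simps)
  finally have fin: "a * b * c * (3221^m * K^m) \<le> (2 * (X * Y * Z)) * (3221^m * K^m)" .
  have pos: "3221^m * K^m > 0" using K(4) by simp
  have "a * b * c \<le> 2 * (X * Y * Z)"
    using fin pos by (subst (asm) mult_le_cancel2) blast
  moreover have "X * Y * Z > 0" using X25 Y81 Z1 by simp
  ultimately show False using ineq1 by linarith
qed

end
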